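(* Let $P(q)=\sum_{j=0}^{n} q^{j}a_{j}$ be a slice regular polynomial of degree $n$ with all coefficients $a_j\in\mathbb H$. Assume that for some $I\in\mathbb S$, the restriction $P_I$ of $P$ to $\mathbb C_I$ has no zero in the open unit disk $\mathbb B_I=\{q\in\mathbb C_I:|q|<1\}$, and $P_I(\mathbb C_I)\subset\mathbb C_I$. Then $$\|P'\|\leq\frac{n}{2}\|P\|,$$ where $P'(q)=\sum_{j=1}^n q^{j-1}ja_j$ and $\|F\|=\max_{|q|\le1}|F(q)|$.
   Context: $\mathbb H$ denotes the quaternions with modulus $|q|=\sqrt{q\bar q}$; $\mathbb S=\{q\in\mathbb H:q^2=-1\}$; for $I\in\mathbb S$, $\mathbb C_I=\mathbb R\oplus I\mathbb R$ (a copy of $\mathbb C$). A slice regular polynomial of degree $n$ is a function $q\mapsto\sum_{j=0}^n q^ja_j$ with coefficients on the right and $a_n\neq0$. *)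

theory Defs
  imports "HOL-Analysis.Analysis"
begin

datatype quat = Quat (qRe: real) (qI: real) (qJ: real) (qK: real)

instantiation quat :: ring_1
begin
definition "0 = Quat 0 0 0 0"
definition "1 = Quat 1 0 0 0"
definition "x + y = Quat (qRe x + qRe y) (qI x + qI y) (qJ x + qJ y) (qK x + qK y)"
definition "x - y = Quat (qRe x - qRe y) (qI x - qI y) (qJ x - qJ y) (qK x - qK y)"
definition "- x = Quat (- qRe x) (- qI x) (- qJ x) (- qK x)"
definition "x * y = Quat
   (qRe x * qRe y - qI x * qI y - qJ x * qJ y - qK x * qK y)
   (qRe x * qI y + qI x * qRe y + qJ x * qK y - qK x * qJ y)
   (qRe x * qJ y - qI x * qK y + qJ x * qRe y + qK x * qI y)
   (qRe x * qK y + qI x * qJ y - qJ x * qI y + qK x * qRe y)"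
instance
  by standard (auto simp: zero_quat_def one_quat_def plus_quat_def minus_quat_def
      uminus_quat_def times_quat_def algebra_simps intro: quat.expand)
end

definition qreal :: "real \<Rightarrow> quat" where "qreal r = Quat r 0 0 0"

definition qnorm :: "quat \<Rightarrow> real" where
  "qnorm q = sqrt ((qRe q)\<^sup>2 + (qI q)\<^sup>2 + (qJ q)\<^sup>2 + (qK q)\<^sup>2)"

definition imag_units :: "quat set" where "imag_units = {q. q * q = - 1}"

definition slice :: "quat \<Rightarrow> quat set" where
  "slice I = {qreal x + qreal y * I | x y. True}"

definition spoly :: "nat \<Rightarrow> (nat \<Rightarrow> quat) \<Rightarrow> quat \<Rightarrow> quat" where
  "spoly n a q = (\<Sum>j=0..n. q ^ j * a j)"

definition spoly_deriv :: "nat \<Rightarrow> (nat \<Rightarrow> quat) \<Rightarrow> quat \<Rightarrow> quat" where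
  "spoly_deriv n a q = (\<Sum>j=1..n. q ^ (j - 1) * (of_nat j * a j))"

text \<open>Sup norm over the closed unit ball of H (a maximum for polynomials).\<close>
definition supnorm :: "(quat \<Rightarrow> quat) \<Rightarrow> real" where
  "supnorm F = (SUP q\<in>{q. qnorm q \<le> 1}. qnorm (F q))"

end

theory Submission
  imports Defs "HOL-Complex_Analysis.Complex_Analysis" "HOL-Computational_Algebra.Fundamental_Theorem_Algebra"
begin


lemma re_half:
  fixes z w :: complex assumes "cmod z = 1" "cmod w \<le> 1" "z \<noteq> w"
  shows "Re (z / (z - w)) \<ge> 1/2"
proof -
  obtain x y where z: "z = Complex x y" by (cases z)
  obtain u v where w: "w = Complex u v" by (cases w)
  have 1: "x^2 + y^2 = 1" using assms(1) by (simp add: z cmod_def)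
  have 2: "u^2 + v^2 \<le> 1" using assms(2) by (simp add: w cmod_def)
  have 3: "(x-u)^2 + (y-v)^2 > 0" proof -
    have "x - u \<noteq> 0 \<or> y - v \<noteq> 0" using assms(3) z w by auto
    then show ?thesis by (simp add: sum_power2_gt_zero_iff)
  qed
  have "Re (z / (z - w)) = (x*(x-u) + y*(y-v)) / ((x-u)^2 + (y-v)^2)"
    by (simp add: z w Re_divide power2_eq_square)
  also have "\<dots> \<ge> 1/2" proof -
    have "(x-u)^2 + (y-v)^2 \<le> 2 * (x*(x-u) + y*(y-v))" using 1 2 by (simp add: power2_eq_square algebra_simps)
    then show ?thesis using 3 by (simp add: le_divide_eq)
  qed
  finally show ?thesis .
qed

lemma lemA:
  fixes F :: "complex poly"
  assumes "F \<noteq> 0" "\<And>w. poly F w = 0 \<Longrightarrow> cmod w \<le> 1" "cmod z = 1" "poly F z \<noteq> 0"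
  shows "Re (z * poly (pderiv F) z / poly F z) \<ge> degree F / 2"
  using assms
proof (induction "degree F" arbitrary: F)
  case 0
  then have "pderiv F = 0" by (simp add: pderiv_eq_0_iff)
  then show ?case using 0 by simp
next
  case (Suc k)
  then have "\<not> constant (poly F)" by (simp add: constant_degree)
  then obtain w where w: "poly F w = 0" using fundamental_theorem_of_algebra by blast
  then obtain G where G: "F = [:-w, 1:] * G" using poly_eq_0_iff_dvd by (metis dvdE)
  have G0: "G \<noteq> 0" using G Suc.prems by auto
  have dG: "degree G = k" proof -
    have "degree F = degree [:-w, 1:] + degree G" unfolding G by (rule degree_mult_eq) (use G0 in auto)
    then show ?thesis using Suc.hyps(2) by simp
  qed
  have rG: "\<And>v. poly G v = 0 \<Longrightarrow> cmod v \<le> 1" using Suc.prems G by auto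
  have zw: "z \<noteq> w" using w Suc.prems by auto
  have Gz: "poly G z \<noteq> 0" using Suc.prems G by auto
  have IH: "Re (z * poly (pderiv G) z / poly G z) \<ge> k / 2"
    using Suc.hyps(1)[of G] dG G0 rG Suc.prems(3) Gz by auto
  have dF: "poly (pderiv F) z = (z - w) * poly (pderiv G) z + poly G z"
    unfolding G pderiv_mult by (simp add: pderiv_pCons algebra_simps)
  have Fz: "poly F z = (z - w) * poly G z" by (simp add: G algebra_simps)
  have "z * poly (pderiv F) z / poly F z = z * poly (pderiv G) z / poly G z + z / (z - w)"
    unfolding dF Fz using zw Gz by (simp add: field_simps)
  then have "Re (z * poly (pderiv F) z / poly F z) = Re (z * poly (pderiv G) z / poly G z) + Re (z / (z - w))"
    by simp
  moreover have "Re (z / (z - w)) \<ge> 1/2" using re_half Suc.prems(3) zw Suc.prems(2)[OF w] by blast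
  ultimately show ?case using IH Suc.hyps(2) by simp
qed

lemma cmod_half:
  fixes W :: complex assumes "Re W \<ge> d / 2" "d \<ge> 0"
  shows "cmod (of_real d - W) \<le> cmod W"
proof -
  obtain a b where W: "W = Complex a b" by (cases W)
  have "d - 2 * a \<le> 0" using assms W by simp
  then have "d * (d - 2 * a) \<le> 0" using assms(2) by (simp add: mult_nonneg_nonpos)
  then have "(d - a)^2 + b^2 \<le> a^2 + b^2" by (simp add: power2_eq_square algebra_simps)
  then show ?thesis using W by (simp add: cmod_def Complex_eq)
qed

lemma lemA2:
  fixes F :: "complex poly"
  assumes "F \<noteq> 0" "\<And>w. poly F w = 0 \<Longrightarrow> cmod w \<le> 1" "cmod z = 1"
  shows "cmod (of_nat (degree F) * poly F z - z * poly (pderiv F) z) \<le> cmod (z * poly (pderiv F) z)"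
proof (cases "poly F z = 0")
  case True then show ?thesis by simp
next
  case False
  define W where "W = z * poly (pderiv F) z / poly F z"
  have "Re W \<ge> real (degree F) / 2" using lemA[OF assms False] by (simp add: W_def)
  then have "cmod (of_real (real (degree F)) - W) \<le> cmod W" by (rule cmod_half) simp
  then have "cmod (poly F z) * cmod (of_real (real (degree F)) - W) \<le> cmod (poly F z) * cmod W"
    by (simp add: mult_left_mono)
  moreover have "of_nat (degree F) * poly F z - z * poly (pderiv F) z = poly F z * (of_real (real (degree F)) - W)"
    using False by (simp add: W_def field_simps)
  moreover have "z * poly (pderiv F) z = poly F z * W" using False by (simp add: W_def)
  ultimately show ?thesis by (simp add: norm_mult)
qed

lemma poly_sumN:
  fixes f :: "complex poly" assumes "degree f \<le> N"
  shows "poly f w = (\<Sum>i\<le>N. coeff f i * w^i)"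
proof -
  have "poly f w = (\<Sum>i\<le>degree f. coeff f i * w^i)" by (rule poly_altdef)
  also have "\<dots> = (\<Sum>i\<le>N. coeff f i * w^i)"
    by (rule sum.mono_neutral_left) (use assms le_degree in auto)
  finally show ?thesis .
qed

lemma wderiv:
  fixes f :: "complex poly" assumes "degree f \<le> N"
  shows "w * poly (pderiv f) w = (\<Sum>i\<le>N. of_nat i * coeff f i * w^i)"
proof -
  have "degree (pderiv f) \<le> N" using assms by (simp add: degree_pderiv)
  then have "w * poly (pderiv f) w = w * (\<Sum>i\<le>N. coeff (pderiv f) i * w^i)" by (simp add: poly_sumN)
  also have "\<dots> = (\<Sum>i\<le>N. of_nat (Suc i) * coeff f (Suc i) * w^(Suc i))"
    by (simp add: sum_distrib_left coeff_pderiv algebra_simps)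
  also have "\<dots> = (\<Sum>i\<le>Suc N. of_nat i * coeff f i * w^i)"
    by (subst sum.atMost_Suc_shift) simp
  also have "\<dots> = (\<Sum>i\<le>N. of_nat i * coeff f i * w^i)"
    using assms by (simp add: coeff_eq_0)
  finally show ?thesis .
qed

definition rflp :: "complex poly \<Rightarrow> complex poly" where
  "rflp p = Abs_poly (\<lambda>i. if i \<le> degree p then cnj (coeff p (degree p - i)) else 0)"

lemma coeff_rflp: "coeff (rflp p) i = (if i \<le> degree p then cnj (coeff p (degree p - i)) else 0)"
  unfolding rflp_def coeff_Abs_poly_If_le by simp

lemma degree_rflp_le: "degree (rflp p) \<le> degree p"
  by (rule degree_le) (simp add: coeff_rflp)

lemma degree_rflp: assumes "coeff p 0 \<noteq> 0" shows "degree (rflp p) = degree p"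
proof (rule antisym[OF degree_rflp_le])
  show "degree p \<le> degree (rflp p)" by (rule le_degree) (simp add: coeff_rflp assms)
qed

lemma pow_diff_inv: fixes w :: complex assumes "w \<noteq> 0" "i \<le> n"
  shows "w ^ (n - i) = w ^ n * inverse w ^ i"
  using assms by (simp add: power_diff power_inverse field_simps)

lemma E1: assumes "w \<noteq> 0"
  shows "poly (rflp p) w = w ^ degree p * cnj (poly p (inverse (cnj w)))"
proof -
  let ?n = "degree p"
  have "poly (rflp p) w = (\<Sum>i\<le>?n. coeff (rflp p) i * w^i)" by (rule poly_sumN[OF degree_rflp_le])
  also have "\<dots> = (\<Sum>i=0..?n. cnj (coeff p (?n - i)) * w^i)" by (simp add: coeff_rflp atLeast0AtMost)
  also have "\<dots> = (\<Sum>i=0..?n. cnj (coeff p i) * w^(?n - i))"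
    by (subst sum.atLeastAtMost_rev) (rule sum.cong, auto)
  also have "\<dots> = (\<Sum>i=0..?n. w ^ ?n * (cnj (coeff p i) * inverse w ^ i))"
    using assms by (intro sum.cong refl) (simp add: pow_diff_inv)
  also have "\<dots> = w ^ ?n * cnj (\<Sum>i\<le>?n. coeff p i * inverse (cnj w) ^ i)"
    by (simp add: sum_distrib_left atLeast0AtMost complex_cnj_inverse)
  also have "\<dots> = w ^ ?n * cnj (poly p (inverse (cnj w)))" by (simp add: poly_altdef)
  finally show ?thesis .
qed

lemma E2: assumes "w \<noteq> 0"
  shows "of_nat (degree p) * poly (rflp p) w - w * poly (pderiv (rflp p)) w
     = w ^ degree p * cnj (inverse (cnj w) * poly (pderiv p) (inverse (cnj w)))"
proof -
  let ?n = "degree p"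
  have "of_nat ?n * poly (rflp p) w - w * poly (pderiv (rflp p)) w
     = of_nat ?n * (\<Sum>i\<le>?n. coeff (rflp p) i * w^i) - (\<Sum>i\<le>?n. of_nat i * coeff (rflp p) i * w^i)"
    by (simp add: poly_sumN[OF degree_rflp_le] wderiv[OF degree_rflp_le])
  also have "\<dots> = (\<Sum>i=0..?n. of_nat (?n - i) * cnj (coeff p (?n - i)) * w^i)"
    by (simp add: coeff_rflp atLeast0AtMost sum_distrib_left flip: sum_subtractf)
       (rule sum.cong, auto simp: of_nat_diff algebra_simps)
  also have "\<dots> = (\<Sum>i=0..?n. of_nat i * cnj (coeff p i) * w^(?n - i))"
    by (subst sum.atLeastAtMost_rev) (rule sum.cong, auto)
  also have "\<dots> = (\<Sum>i=0..?n. w ^ ?n * (of_nat i * cnj (coeff p i) * inverse w ^ i))"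
    using assms by (intro sum.cong refl) (simp add: pow_diff_inv)
  also have "\<dots> = w ^ ?n * cnj (\<Sum>i\<le>?n. of_nat i * coeff p i * inverse (cnj w) ^ i)"
    by (simp add: sum_distrib_left atLeast0AtMost complex_cnj_inverse)
  also have "\<dots> = w ^ ?n * cnj (inverse (cnj w) * poly (pderiv p) (inverse (cnj w)))"
    by (subst wderiv[of p ?n]) simp_all
  finally show ?thesis .
qed

lemma circle_bound:
  fixes p :: "complex poly" and M :: real and z :: complex
  assumes n1: "degree p \<ge> 1"
    and nz: "\<And>w. cmod w < 1 \<Longrightarrow> poly p w \<noteq> 0"
    and bd: "\<And>w. cmod w \<le> 1 \<Longrightarrow> cmod (poly p w) \<le> M"
    and z1: "cmod z = 1"
  shows "cmod (poly (pderiv p) z) \<le> real (degree p) / 2 * M"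
proof -
  define n where "n = degree p"
  define q where "q = rflp p"
  have n1': "n \<ge> 1" using n1 by (simp add: n_def)
  have c0: "coeff p 0 \<noteq> 0" using nz[of 0] by (simp add: poly_0_coeff_0)
  have cM: "cmod (coeff p 0) \<le> M" using bd[of 0] by (simp add: poly_0_coeff_0)
  have "0 < cmod (coeff p 0)" using c0 by simp
  then have Mpos: "M > 0" using cM by linarith
  have dq: "degree q = n" using degree_rflp[OF c0] by (simp add: q_def n_def)
  have z0: "z \<noteq> 0" using z1 by auto
  have invz: "inverse (cnj z) = z"
  proof (rule inverse_unique)
    have "of_real ((cmod z)^2) = z * cnj z" by (rule complex_norm_square)
    then show "cnj z * z = 1" using z1 by (simp add: mult.commute)
  qed
  have zn: "cmod (z^n) = 1" by (simp add: norm_power z1)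
  have E2z: "cmod (of_nat n * poly q z - z * poly (pderiv q) z) = cmod (poly (pderiv p) z)"
    using E2[OF z0, of p] by (simp add: q_def n_def invz norm_mult norm_power z1)
  define Q where "Q = z * poly (pderiv q) z"
  have q0: "q \<noteq> 0" using dq n1' by auto
  have inv_lt: "cmod (inverse (cnj w)) < 1" if "cmod w > 1" for w
    using that by (simp add: norm_inverse inverse_less_1_iff inverse_le_1_iff)
  have inv_le: "cmod (inverse (cnj w)) \<le> 1" if "cmod w \<ge> 1" for w
    using that by (simp add: norm_inverse inverse_less_1_iff inverse_le_1_iff)
  have rootq: "cmod w \<le> 1" if "poly q w = 0" for w
  proof (rule ccontr)
    assume "\<not> cmod w \<le> 1"
    then have w0: "w \<noteq> 0" and w1: "cmod w > 1" by auto
    have "poly p (inverse (cnj w)) = 0" using E1[OF w0, of p] that w0 by (simp add: q_def)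
    then show False using nz inv_lt[OF w1] by blast
  qed
  have S1: "cmod (poly (pderiv p) z) \<le> cmod Q" using lemA2[OF q0 rootq z1] E2z dq by (simp add: Q_def)
  have S2: "Q \<noteq> l * M * of_nat n * z^n \<and> cmod (poly (pderiv p) z) \<le> cmod (Q - l * M * of_nat n * z^n)"
    if l1: "cmod l > 1" for l
  proof -
    define F where "F = q - smult (l * of_real M) (monom 1 n)"
    have cF: "coeff F n = cnj (coeff p 0) - l * M" by (simp add: F_def coeff_rflp q_def n_def)
    have "cmod (l * M) > M" using l1 Mpos by (simp add: norm_mult)
    then have cFn: "coeff F n \<noteq> 0"
    proof (intro notI)
      assume "M < cmod (l * M)" "coeff F n = 0"
      then have "cnj (coeff p 0) = l * M" using cF by simp
      then have "cmod (l * M) = cmod (coeff p 0)" by (metis complex_mod_cnj)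
      then show False using \<open>M < cmod (l * M)\<close> cM by simp
    qed
    have dF: "degree F = n"
    proof (rule antisym)
      show "degree F \<le> n" by (rule degree_le) (simp add: F_def coeff_eq_0 dq coeff_monom)
      show "n \<le> degree F" by (rule le_degree[OF cFn])
    qed
    have F0: "F \<noteq> 0" using cFn by auto
    have rootF: "cmod w < 1" if h: "poly F w = 0" for w
    proof (rule ccontr)
      assume "\<not> cmod w < 1"
      then have w1: "cmod w \<ge> 1" and w0: "w \<noteq> 0" by auto
      have "poly q w = l * M * w^n" using h by (simp add: F_def poly_monom)
      then have "w^n * cnj (poly p (inverse (cnj w))) = w^n * (l * M)"
        using E1[OF w0, of p] by (simp add: q_def n_def mult.commute)
      then have "cnj (poly p (inverse (cnj w))) = l * M" using w0 by simp
      then have "cmod (l * M) = cmod (poly p (inverse (cnj w)))" by (metis complex_mod_cnj)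
      then have "cmod l * M = cmod (poly p (inverse (cnj w)))" using Mpos by (simp add: norm_mult)
      moreover have "cmod (poly p (inverse (cnj w))) \<le> M" using bd inv_le[OF w1] by blast
      ultimately have "cmod l * M \<le> M" by simp
      then have "cmod l * M \<le> 1 * M" by simp
      then have "cmod l \<le> 1" using Mpos by (rule mult_right_le_imp_le)
      then show False using l1 by simp
    qed
    have Fz: "poly F z \<noteq> 0" using rootF z1 by force
    have zz: "z * z ^ (n - 1) = z ^ n" using n1' by (simp add: power_eq_if)
    have dFz: "z * poly (pderiv F) z = Q - l * M * of_nat n * z^n"
    proof -
      have "pderiv F = pderiv q - smult (l * of_real M) (monom (of_nat n) (n-1))"
        by (simp add: F_def pderiv_diff pderiv_smult pderiv_monom)
      then have "poly (pderiv F) z = poly (pderiv q) z - l * M * (of_nat n * z^(n-1))"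
        by (simp add: poly_monom)
      then have "z * poly (pderiv F) z = z * (poly (pderiv q) z - l * M * (of_nat n * z^(n-1)))"
        by simp
      also have "\<dots> = Q - l * M * of_nat n * (z * z^(n-1))"
        unfolding Q_def right_diff_distrib by (simp only: mult_ac)
      finally have "z * poly (pderiv F) z = Q - l * M * of_nat n * (z * z^(n-1))" .
      then show ?thesis by (simp only: zz)
    qed
    have nF: "of_nat n * poly F z - z * poly (pderiv F) z = of_nat n * poly q z - z * poly (pderiv q) z"
      unfolding dFz by (simp add: F_def poly_monom Q_def algebra_simps)
    have rootF': "cmod w \<le> 1" if "poly F w = 0" for w using rootF[OF that] by simp
    have "Re (z * poly (pderiv F) z / poly F z) \<ge> real n / 2" using lemA[OF F0 rootF' z1 Fz] dF by simp
    then have ne: "z * poly (pderiv F) z \<noteq> 0" using n1' by auto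
    have "cmod (of_nat n * poly F z - z * poly (pderiv F) z) \<le> cmod (z * poly (pderiv F) z)"
      using lemA2[OF F0 rootF' z1] dF by simp
    then show ?thesis using nF E2z dFz ne by simp
  qed
  have S3: "cmod Q \<le> n * M"
  proof (rule ccontr)
    assume h: "\<not> cmod Q \<le> n * M"
    define l where "l = Q / (of_real M * of_nat n * z^n)"
    have nM: "real n * M > 0" using n1' Mpos by simp
    have "cmod l = cmod Q / (M * n)" using Mpos by (simp add: l_def norm_mult norm_divide zn)
    then have "cmod l > 1" using h nM by (simp add: mult.commute)
    moreover have "l * M * of_nat n * z^n = Q" using Mpos n1' z0 by (simp add: l_def)
    ultimately show False using S2 by blast
  qed
  have S4: "cmod (poly (pderiv p) z) \<le> t * n * M - cmod Q" if t1: "t > 1" for t :: real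
  proof -
    define u where "u = (if Q = 0 then 1 else Q / of_real (cmod Q))"
    have u1: "cmod u = 1" by (simp add: u_def norm_divide)
    have Qu: "Q = of_real (cmod Q) * u" by (simp add: u_def)
    define l where "l = of_real t * u / z^n"
    have "cmod l = t" using t1 by (simp add: l_def norm_mult norm_divide zn u1)
    then have "cmod (poly (pderiv p) z) \<le> cmod (Q - l * M * of_nat n * z^n)" using S2 t1 by auto
    also have "Q - l * M * of_nat n * z^n = of_real (cmod Q - t * M * n) * u"
      using z0 by (subst Qu) (simp add: l_def algebra_simps)
    also have "cmod \<dots> = \<bar>cmod Q - t * M * n\<bar>" by (metis norm_mult u1 norm_of_real mult.right_neutral)
    also have "\<dots> = t * n * M - cmod Q"
    proof -
      have "1 * (n * M) \<le> t * (n * M)" using t1 Mpos by (intro mult_right_mono) simp_all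
      then show ?thesis using S3 by (simp add: algebra_simps)
    qed
    finally show ?thesis .
  qed
  have S5: "cmod (poly (pderiv p) z) \<le> n * M - cmod Q"
  proof (rule field_le_epsilon)
    fix e :: real assume e: "e > 0"
    have nM: "real n * M > 0" using n1' Mpos by simp
    have "cmod (poly (pderiv p) z) \<le> (1 + e / (n * M)) * n * M - cmod Q"
      by (rule S4) (use e nM in simp)
    also have "\<dots> = n * M - cmod Q + e" using nM Mpos n1' by (simp add: field_simps)
    finally show "cmod (poly (pderiv p) z) \<le> n * M - cmod Q + e" .
  qed
  show ?thesis using S1 S5 unfolding n_def by linarith
qed

lemma disk_bound:
  fixes p :: "complex poly" and M :: real and z :: complex
  assumes n1: "degree p \<ge> 1"
    and nz: "\<And>w. cmod w < 1 \<Longrightarrow> poly p w \<noteq> 0"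
    and bd: "\<And>w. cmod w \<le> 1 \<Longrightarrow> cmod (poly p w) \<le> M"
    and z1: "cmod z \<le> 1"
  shows "cmod (poly (pderiv p) z) \<le> real (degree p) / 2 * M"
proof (rule maximum_modulus_frontier[where f="poly (pderiv p)" and S="cball 0 1"])
  show "poly (pderiv p) holomorphic_on interior (cball 0 1)"
    using poly_holomorphic_on[of "\<lambda>z. z" _ "pderiv p"] by (simp add: holomorphic_on_ident)
  show "continuous_on (closure (cball 0 1)) (poly (pderiv p))"
    using continuous_on_poly[of _ "\<lambda>z. z" "pderiv p"] by (simp add: continuous_on_id)
  show "bounded (cball (0::complex) 1)" by simp
  show "cmod (poly (pderiv p) w) \<le> real (degree p) / 2 * M" if "w \<in> frontier (cball 0 1)" for w
    using that circle_bound[OF n1 nz bd] by simp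
  show "z \<in> cball 0 1" using z1 by simp
qed



lemma quat_eqI: "qRe x = qRe y \<Longrightarrow> qI x = qI y \<Longrightarrow> qJ x = qJ y \<Longrightarrow> qK x = qK y \<Longrightarrow> x = y"
  by (cases x, cases y) simp

lemma qcomp_simps [simp]:
  "qRe (x * y) = qRe x * qRe y - qI x * qI y - qJ x * qJ y - qK x * qK y"
  "qI (x * y) = qRe x * qI y + qI x * qRe y + qJ x * qK y - qK x * qJ y"
  "qJ (x * y) = qRe x * qJ y - qI x * qK y + qJ x * qRe y + qK x * qI y"
  "qK (x * y) = qRe x * qK y + qI x * qJ y - qJ x * qI y + qK x * qRe y"
  "qRe (x + y) = qRe x + qRe y" "qI (x + y) = qI x + qI y" "qJ (x + y) = qJ x + qJ y" "qK (x + y) = qK x + qK y"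
  "qRe (x - y) = qRe x - qRe y" "qI (x - y) = qI x - qI y" "qJ (x - y) = qJ x - qJ y" "qK (x - y) = qK x - qK y"
  "qRe (- x) = - qRe x" "qI (- x) = - qI x" "qJ (- x) = - qJ x" "qK (- x) = - qK x"
  "qRe 0 = 0" "qI 0 = 0" "qJ 0 = 0" "qK 0 = 0"
  "qRe 1 = 1" "qI 1 = 0" "qJ 1 = 0" "qK 1 = 0"
  by (simp_all add: times_quat_def plus_quat_def minus_quat_def uminus_quat_def zero_quat_def one_quat_def)

lemma qcomp_sum:
  "qRe (sum f S) = (\<Sum>x\<in>S. qRe (f x))" "qI (sum f S) = (\<Sum>x\<in>S. qI (f x))"
  "qJ (sum f S) = (\<Sum>x\<in>S. qJ (f x))" "qK (sum f S) = (\<Sum>x\<in>S. qK (f x))"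
  by (induct S rule: infinite_finite_induct, simp_all)+

lemma qcomp_of_nat [simp]:
  "qRe (of_nat n) = real n" "qI (of_nat n) = 0" "qJ (of_nat n) = 0" "qK (of_nat n) = 0"
  by (induct n, simp_all)+

definition unitim :: "quat \<Rightarrow> bool" where
  "unitim K \<longleftrightarrow> qRe K = 0 \<and> (qI K)^2 + (qJ K)^2 + (qK K)^2 = 1"

definition psi :: "quat \<Rightarrow> complex \<Rightarrow> quat" where
  "psi K z = Quat (Re z) (Im z * qI K) (Im z * qJ K) (Im z * qK K)"

lemma psi_comp [simp]:
  "qRe (psi K z) = Re z" "qI (psi K z) = Im z * qI K" "qJ (psi K z) = Im z * qJ K" "qK (psi K z) = Im z * qK K"
  by (simp_all add: psi_def)

lemma psi_mult: assumes "unitim K" shows "psi K (z * w) = psi K z * psi K w"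
proof -
  have "(qI K)^2 + (qJ K)^2 + (qK K)^2 = 1" "qRe K = 0" using assms by (auto simp: unitim_def)
  then show ?thesis by (intro quat_eqI) (simp_all add: algebra_simps, algebra)
qed

lemma psi_add: "psi K (z + w) = psi K z + psi K w"
  by (intro quat_eqI) (simp_all add: algebra_simps)

lemma psi_0 [simp]: "psi K 0 = 0" by (intro quat_eqI) simp_all
lemma psi_1: "psi K 1 = 1" by (intro quat_eqI) simp_all

lemma psi_power: assumes "unitim K" shows "psi K (z ^ n) = psi K z ^ n"
  by (induct n) (simp_all add: psi_1 psi_mult[OF assms])

lemma psi_sum: "psi K (sum f S) = (\<Sum>x\<in>S. psi K (f x))"
  by (induct S rule: infinite_finite_induct) (simp_all add: psi_add)

lemma qnorm_psi: assumes "unitim K" shows "qnorm (psi K z) = cmod z"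
proof -
  have "(qI K)^2 + (qJ K)^2 + (qK K)^2 = 1" using assms by (auto simp: unitim_def)
  then have "(Re z)^2 + (Im z * qI K)^2 + (Im z * qJ K)^2 + (Im z * qK K)^2 = (Re z)^2 + (Im z)^2"
    by algebra
  then show ?thesis by (simp add: qnorm_def cmod_def)
qed

lemma psi_inj: assumes "unitim K" "psi K z = 0" shows "z = 0"
  using qnorm_psi[OF assms(1), of z] assms(2) by (simp add: qnorm_def)

lemma mixed: assumes "qRe J = 0"
  shows "psi J u * psi I v = psi I (of_real (Re u) * v) + J * psi I (of_real (Im u) * v)"
  using assms by (intro quat_eqI) (simp_all add: algebra_simps)

lemma K_lemma:
  assumes I: "unitim I" and J: "unitim J"
  shows "qnorm (psi I A + J * psi I B) \<le> max (cmod (A + \<i> * B)) (cmod (A - \<i> * B))"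
proof -
  define s where "s = qI I * qI J + qJ I * qJ J + qK I * qK J"
  have nI: "(qI I)^2 + (qJ I)^2 + (qK I)^2 = 1" and rI: "qRe I = 0" using I by (auto simp: unitim_def)
  have nJ: "(qI J)^2 + (qJ J)^2 + (qK J)^2 = 1" and rJ: "qRe J = 0" using J by (auto simp: unitim_def)
  define X where "X = (cmod (A + \<i> * B))^2"
  define Y where "Y = (cmod (A - \<i> * B))^2"
  have X: "X = (Re A - Im B)^2 + (Im A + Re B)^2" by (simp add: X_def cmod_def)
  have Y: "Y = (Re A + Im B)^2 + (Im A - Re B)^2" by (simp add: Y_def cmod_def)
  have "(qnorm (psi I A + J * psi I B))^2 = (1 + s) / 2 * X + (1 - s) / 2 * Y"
    unfolding X Y s_def qnorm_def using nI nJ rI rJ by (simp add: algebra_simps) algebra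
  moreover have "s \<le> 1" "- 1 \<le> s"
  proof -
    have "0 \<le> (qI I - qI J)^2 + (qJ I - qJ J)^2 + (qK I - qK J)^2" by simp
    moreover have "0 \<le> (qI I + qI J)^2 + (qJ I + qJ J)^2 + (qK I + qK J)^2" by simp
    ultimately show "s \<le> 1" "- 1 \<le> s" using nI nJ unfolding s_def by (simp_all add: power2_eq_square algebra_simps)
  qed
  ultimately have "(qnorm (psi I A + J * psi I B))^2 \<le> max X Y"
  proof -
    assume eq: "(qnorm (psi I A + J * psi I B))^2 = (1 + s) / 2 * X + (1 - s) / 2 * Y"
       and s: "s \<le> 1" "- 1 \<le> s"
    have "(1 + s) / 2 * X \<le> (1 + s) / 2 * max X Y" using s by (intro mult_left_mono) auto
    moreover have "(1 - s) / 2 * Y \<le> (1 - s) / 2 * max X Y" using s by (intro mult_left_mono) auto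
    moreover have "(1 + s) / 2 * max X Y + (1 - s) / 2 * max X Y = max X Y" by (simp add: field_simps)
    ultimately show ?thesis using eq by linarith
  qed
  also have "max X Y = (max (cmod (A + \<i> * B)) (cmod (A - \<i> * B)))^2"
    by (simp add: X_def Y_def max_def power_mono)
  finally show ?thesis by (rule power2_le_imp_le) (simp add: le_max_iff_disj)
qed

lemma imag_unitim: assumes "I \<in> imag_units" shows "unitim I"
proof -
  have e: "I * I = - 1" using assms by (simp add: imag_units_def)
  have 0: "(qRe I)^2 - (qI I)^2 - (qJ I)^2 - (qK I)^2 = -1"
    using arg_cong[OF e, of qRe] by (simp add: power2_eq_square)
  have 1: "qRe I * qI I = 0" "qRe I * qJ I = 0" "qRe I * qK I = 0"
    using arg_cong[OF e, of qI] arg_cong[OF e, of qJ] arg_cong[OF e, of qK] by (simp_all add: algebra_simps)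
  have r: "qRe I = 0"
  proof (rule ccontr)
    assume "qRe I \<noteq> 0"
    then have "qI I = 0" "qJ I = 0" "qK I = 0" using 1 by auto
    then have "(qRe I)^2 = -1" using 0 by simp
    then show False using zero_le_power2[of "qRe I"] by linarith
  qed
  then show ?thesis using 0 by (simp add: unitim_def)
qed

lemma qnorm_mult: "qnorm (x * y) = qnorm x * qnorm y"
proof -
  have "(qRe (x*y))^2 + (qI (x*y))^2 + (qJ (x*y))^2 + (qK (x*y))^2
     = ((qRe x)^2 + (qI x)^2 + (qJ x)^2 + (qK x)^2) * ((qRe y)^2 + (qI y)^2 + (qJ y)^2 + (qK y)^2)"
    by simp algebra
  then show ?thesis by (simp add: qnorm_def real_sqrt_mult)
qed

lemma qnorm_pair: "qnorm x = norm (Complex (qRe x) (qI x), Complex (qJ x) (qK x))"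
  by (simp add: qnorm_def norm_Pair cmod_def add.assoc)

lemma qnorm_add: "qnorm (x + y) \<le> qnorm x + qnorm y"
proof -
  have "(Complex (qRe (x+y)) (qI (x+y)), Complex (qJ (x+y)) (qK (x+y)))
     = (Complex (qRe x) (qI x), Complex (qJ x) (qK x)) + (Complex (qRe y) (qI y), Complex (qJ y) (qK y))"
    by (simp add: complex_eq_iff)
  then show ?thesis unfolding qnorm_pair by (metis norm_triangle_ineq)
qed

lemma qnorm_nonneg: "qnorm x \<ge> 0" by (simp add: qnorm_def)

lemma qnorm_sum: "qnorm (sum f S) \<le> (\<Sum>x\<in>S. qnorm (f x))"
proof (induct S rule: infinite_finite_induct)
  case (insert x F)
  then show ?case using qnorm_add[of "f x" "sum f F"] by simp
qed (simp_all add: qnorm_def)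

lemma qnorm_power: "qnorm (x ^ n) = qnorm x ^ n"
  by (induct n) (simp_all add: qnorm_mult, simp add: qnorm_def)

lemma psi_slice: assumes "unitim I" shows "psi I z \<in> slice I"
proof -
  have "psi I z = qreal (Re z) + qreal (Im z) * I"
    using assms by (intro quat_eqI) (simp_all add: qreal_def unitim_def)
  then show ?thesis by (auto simp: slice_def)
qed

lemma slice_kappa: assumes "w \<in> slice I" "unitim I"
  shows "qJ w * qK I - qK w * qJ I = 0" "qK w * qI I - qI w * qK I = 0" "qI w * qJ I - qJ w * qI I = 0"
  using assms by (auto simp: slice_def qreal_def unitim_def algebra_simps)

lemma kappa_psi: assumes "unitim I"
  "qJ w * qK I - qK w * qJ I = 0" "qK w * qI I - qI w * qK I = 0" "qI w * qJ I - qJ w * qI I = 0"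
  shows "w = psi I (Complex (qRe w) (qI I * qI w + qJ I * qJ w + qK I * qK w))"
proof -
  have n: "(qI I)^2 + (qJ I)^2 + (qK I)^2 = 1" using assms(1) by (simp add: unitim_def)
  show ?thesis using n assms(2-4) by (intro quat_eqI) (simp_all, algebra+)
qed

lemma qreal_comp [simp]: "qRe (qreal s) = s" "qI (qreal s) = 0" "qJ (qreal s) = 0" "qK (qreal s) = 0"
  by (simp_all add: qreal_def)

lemma qreal_power: "qreal t ^ j = qreal (t ^ j)"
  by (induct j) (simp_all add: qreal_def times_quat_def one_quat_def)

lemma qreal_mult_comp [simp]:
  "qRe (qreal t * x) = t * qRe x" "qI (qreal t * x) = t * qI x"
  "qJ (qreal t * x) = t * qJ x" "qK (qreal t * x) = t * qK x"
  by (simp_all add: qreal_def)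

lemma qreal_slice: "qreal t \<in> slice I"
  unfolding slice_def by (rule CollectI, rule exI[of _ t], rule exI[of _ 0]) (simp add: qreal_def zero_quat_def plus_quat_def times_quat_def)

lemma spoly_qreal_comp:
  "qJ (spoly n a (qreal t)) * qK I - qK (spoly n a (qreal t)) * qJ I
     = (\<Sum>j\<le>n. (qJ (a j) * qK I - qK (a j) * qJ I) * t ^ j)"
  "qK (spoly n a (qreal t)) * qI I - qI (spoly n a (qreal t)) * qK I
     = (\<Sum>j\<le>n. (qK (a j) * qI I - qI (a j) * qK I) * t ^ j)"
  "qI (spoly n a (qreal t)) * qJ I - qJ (spoly n a (qreal t)) * qI I
     = (\<Sum>j\<le>n. (qI (a j) * qJ I - qJ (a j) * qI I) * t ^ j)"
proof -
  have c: "qI (spoly n a (qreal t)) = (\<Sum>j\<le>n. qI (a j) * t ^ j)"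
     "qJ (spoly n a (qreal t)) = (\<Sum>j\<le>n. qJ (a j) * t ^ j)"
     "qK (spoly n a (qreal t)) = (\<Sum>j\<le>n. qK (a j) * t ^ j)"
    by (simp_all add: spoly_def qreal_power qcomp_sum atLeast0AtMost mult.commute)
  show "qJ (spoly n a (qreal t)) * qK I - qK (spoly n a (qreal t)) * qJ I
     = (\<Sum>j\<le>n. (qJ (a j) * qK I - qK (a j) * qJ I) * t ^ j)"
    "qK (spoly n a (qreal t)) * qI I - qI (spoly n a (qreal t)) * qK I
     = (\<Sum>j\<le>n. (qK (a j) * qI I - qI (a j) * qK I) * t ^ j)"
    "qI (spoly n a (qreal t)) * qJ I - qJ (spoly n a (qreal t)) * qI I
     = (\<Sum>j\<le>n. (qI (a j) * qJ I - qJ (a j) * qI I) * t ^ j)"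
    unfolding c sum_distrib_right by (simp_all add: algebra_simps sum_subtractf)
qed

lemma reim_mult:
  "of_real (Re w) * d + \<i> * (of_real (Im w) * d) = w * d"
  "of_real (Re w) * d - \<i> * (of_real (Im w) * d) = cnj w * d"
  by (simp_all add: complex_eq_iff algebra_simps)

theorem proposition2p2:
  fixes n :: nat and a :: "nat \<Rightarrow> quat" and I :: quat
  assumes "a n \<noteq> 0"
    and "I \<in> imag_units"
    and "\<forall>z\<in>slice I. qnorm z < 1 \<longrightarrow> spoly n a z \<noteq> 0"
    and "spoly n a ` slice I \<subseteq> slice I"
  shows "supnorm (spoly_deriv n a) \<le> real n / 2 * supnorm (spoly n a)"
proof -
  have I: "unitim I" using assms(2) by (rule imag_unitim)
  define cc where "cc j = Complex (qRe (a j)) (qI I * qI (a j) + qJ I * qJ (a j) + qK I * qK (a j))" for j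
  have acc: "a j = psi I (cc j)" if "j \<le> n" for j
  proof -
    have sl: "spoly n a (qreal t) \<in> slice I" for t using assms(4) qreal_slice by blast
    have "\<forall>t. (\<Sum>j\<le>n. (qJ (a j) * qK I - qK (a j) * qJ I) * t ^ j) = 0"
         "\<forall>t. (\<Sum>j\<le>n. (qK (a j) * qI I - qI (a j) * qK I) * t ^ j) = 0"
         "\<forall>t. (\<Sum>j\<le>n. (qI (a j) * qJ I - qJ (a j) * qI I) * t ^ j) = 0"
      using slice_kappa[OF sl I] by (simp_all flip: spoly_qreal_comp)
    then have "qJ (a j) * qK I - qK (a j) * qJ I = 0" "qK (a j) * qI I - qI (a j) * qK I = 0"
       "qI (a j) * qJ I - qJ (a j) * qI I = 0"
      using that by (simp_all only: polyfun_eq_0)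
    then show ?thesis unfolding cc_def by (rule kappa_psi[OF I])
  qed
  show ?thesis
  proof (cases "n = 0")
    case True
    have "spoly_deriv n a = (\<lambda>q. 0)" using True by (simp add: spoly_deriv_def fun_eq_iff)
    moreover have "(0::quat) \<in> {q. qnorm q \<le> 1}" by (simp add: qnorm_def)
    then have "{q. qnorm q \<le> 1} \<noteq> {}" by blast
    ultimately have "supnorm (spoly_deriv n a) = 0" by (simp add: supnorm_def qnorm_def)
    then show ?thesis using True by simp
  next
    case False
    then obtain m where nm: "n = Suc m" using not0_implies_Suc by blast
    define S where "S = {q. qnorm q \<le> 1}"
    define M where "M = supnorm (spoly n a)"
    define p where "p = Abs_poly (\<lambda>j. if j \<le> n then cc j else 0)"
    have cp: "coeff p = (\<lambda>j. if j \<le> n then cc j else 0)" by (simp add: p_def coeff_Abs_poly_If_le)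
    have ccn: "cc n \<noteq> 0" using acc[of n] assms(1) by auto
    have dp: "degree p = n"
    proof (rule antisym)
      show "degree p \<le> n" by (rule degree_le) (simp add: cp)
      show "n \<le> degree p" by (rule le_degree) (simp add: cp ccn)
    qed
    have polyp: "poly p z = (\<Sum>j\<le>n. cc j * z^j)" for z
      by (simp add: poly_altdef dp cp)
    have dpoly: "poly (pderiv p) z = (\<Sum>j=1..n. z^(j-1) * (of_nat j * cc j))" for z
    proof -
      have "poly (pderiv p) z = (\<Sum>i\<le>m. coeff (pderiv p) i * z^i)"
        by (simp add: poly_altdef degree_pderiv dp nm)
      also have "\<dots> = (\<Sum>i=0..m. z^i * (of_nat (Suc i) * cc (Suc i)))"
        by (simp add: coeff_pderiv cp nm atLeast0AtMost mult.commute)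
      also have "\<dots> = (\<Sum>j=Suc 0..Suc m. z^(j-1) * (of_nat j * cc j))"
        by (subst sum.shift_bounds_cl_Suc_ivl) simp
      finally show ?thesis by (simp add: nm)
    qed
    have Pz: "spoly n a (psi I z) = psi I (poly p z)" for z
    proof -
      have "spoly n a (psi I z) = (\<Sum>j=0..n. psi I (z^j * cc j))"
        unfolding spoly_def by (rule sum.cong) (simp_all add: acc psi_power[OF I] psi_mult[OF I])
      also have "\<dots> = psi I (poly p z)" by (simp add: psi_sum polyp atLeast0AtMost mult.commute)
      finally show ?thesis .
    qed
    have ofn: "of_nat j * a j = psi I (of_nat j * cc j)" if "j \<le> n" for j
      using acc[OF that] by (intro quat_eqI) simp_all
    have P'q: "spoly_deriv n a q = (\<Sum>j=1..n. q^(j-1) * psi I (of_nat j * cc j))" for q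
      unfolding spoly_deriv_def by (rule sum.cong) (simp_all add: ofn)
    have bdd: "bdd_above ((\<lambda>q. qnorm (spoly n a q)) ` S)"
    proof (rule bdd_aboveI2)
      fix q assume "q \<in> S"
      then have q1: "qnorm q \<le> 1" by (simp add: S_def)
      have "qnorm (spoly n a q) \<le> (\<Sum>j=0..n. qnorm (q^j * a j))" unfolding spoly_def by (rule qnorm_sum)
      also have "\<dots> \<le> (\<Sum>j=0..n. qnorm (a j))"
      proof (rule sum_mono)
        fix j
        have qj: "qnorm q ^ j \<le> 1" using q1 qnorm_nonneg by (simp add: power_le_one)
        then show "qnorm (q^j * a j) \<le> qnorm (a j)"
          using mult_right_mono[OF qj qnorm_nonneg[of "a j"]] by (simp add: qnorm_mult qnorm_power)
      qed
      finally show "qnorm (spoly n a q) \<le> (\<Sum>j=0..n. qnorm (a j))" .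
    qed
    have bd: "cmod (poly p z) \<le> M" if "cmod z \<le> 1" for z
    proof -
      have "psi I z \<in> S" using that by (simp add: S_def qnorm_psi[OF I])
      then have "qnorm (spoly n a (psi I z)) \<le> M"
        unfolding M_def supnorm_def S_def[symmetric] by (rule cSUP_upper[OF _ bdd])
      then show ?thesis by (simp add: Pz qnorm_psi[OF I])
    qed
    have nz: "poly p z \<noteq> 0" if "cmod z < 1" for z
    proof
      assume "poly p z = 0"
      then have "spoly n a (psi I z) = 0" by (simp add: Pz)
      moreover have "psi I z \<in> slice I" by (rule psi_slice[OF I])
      moreover have "qnorm (psi I z) < 1" using that by (simp add: qnorm_psi[OF I])
      ultimately show False using assms(3) by blast
    qed
    have n1: "degree p \<ge> 1" using dp False by simp
    have DB: "cmod (poly (pderiv p) z) \<le> real n / 2 * M" if "cmod z \<le> 1" for z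
      using disk_bound[OF n1 nz bd that] dp by simp
    have main: "qnorm (spoly_deriv n a q) \<le> real n / 2 * M" if "q \<in> S" for q
    proof -
      define r where "r = sqrt ((qI q)^2 + (qJ q)^2 + (qK q)^2)"
      define J where "J = (if r = 0 then I else Quat 0 (qI q / r) (qJ q / r) (qK q / r))"
      define z where "z = Complex (qRe q) r"
      have r2: "r^2 = (qI q)^2 + (qJ q)^2 + (qK q)^2" by (simp add: r_def)
      have J: "unitim J"
      proof (cases "r = 0")
        case True then show ?thesis using I by (simp add: J_def)
      next
        case False
        have "(qI q / r)^2 + (qJ q / r)^2 + (qK q / r)^2 = ((qI q)^2 + (qJ q)^2 + (qK q)^2) / r^2"
          by (simp add: power_divide add_divide_distrib)
        also have "\<dots> = 1" using False by (simp flip: r2)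
        finally show ?thesis using False by (simp add: J_def unitim_def)
      qed
      have qz: "q = psi J z"
      proof (cases "r = 0")
        case True
        then have s0: "(qI q)^2 + (qJ q)^2 + (qK q)^2 = 0" using r2 by simp
        have "(qI q)^2 \<ge> 0" "(qJ q)^2 \<ge> 0" "(qK q)^2 \<ge> 0" by simp_all
        then have "(qI q)^2 = 0" "(qJ q)^2 = 0" "(qK q)^2 = 0" using s0 by linarith+
        then have "qI q = 0" "qJ q = 0" "qK q = 0" by simp_all
        then show ?thesis using True by (intro quat_eqI) (simp_all add: z_def)
      next
        case False
        then show ?thesis by (intro quat_eqI) (simp_all add: z_def J_def)
      qed
      have cz: "cmod z \<le> 1"
      proof -
        have "cmod z = qnorm q" by (simp add: z_def cmod_def qnorm_def r2 add.assoc)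
        then show ?thesis using that by (simp add: S_def)
      qed
      define dd where "dd j = of_nat j * cc j" for j
      define A where "A = (\<Sum>j=1..n. of_real (Re (z^(j-1))) * dd j)"
      define B where "B = (\<Sum>j=1..n. of_real (Im (z^(j-1))) * dd j)"
      have rJ: "qRe J = 0" using J by (simp add: unitim_def)
      have "spoly_deriv n a q = (\<Sum>j=1..n. psi I (of_real (Re (z^(j-1))) * dd j) + J * psi I (of_real (Im (z^(j-1))) * dd j))"
        unfolding P'q qz dd_def by (rule sum.cong) (simp_all add: psi_power[OF J, symmetric] mixed[OF rJ])
      also have "\<dots> = psi I A + J * psi I B"
        by (simp add: A_def B_def psi_sum sum.distrib sum_distrib_left)
      finally have eq: "spoly_deriv n a q = psi I A + J * psi I B" .
      have "A + \<i> * B = poly (pderiv p) z"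
        by (simp add: A_def B_def dpoly dd_def sum_distrib_left reim_mult flip: sum.distrib)
      moreover have "A - \<i> * B = poly (pderiv p) (cnj z)"
        by (simp add: A_def B_def dpoly dd_def sum_distrib_left reim_mult flip: sum_subtractf)
      ultimately have "qnorm (spoly_deriv n a q) \<le> max (cmod (poly (pderiv p) z)) (cmod (poly (pderiv p) (cnj z)))"
        using K_lemma[OF I J, of A B] eq by simp
      also have "\<dots> \<le> real n / 2 * M" using DB[OF cz] DB[of "cnj z"] cz by simp
      finally show ?thesis .
    qed
    have "(0::quat) \<in> S" by (simp add: S_def qnorm_def)
    then have "S \<noteq> {}" by blast
    then have "supnorm (spoly_deriv n a) \<le> real n / 2 * M"
      unfolding supnorm_def S_def[symmetric] by (rule cSUP_least) (rule main)
    then show ?thesis by (simp add: M_def)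
  qed
qed

end
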